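(* For every $n\in\mathbb{N}$, the directed arrowhead $\vec{\mathcal{AT}}_n$ has oriented diameter $\vec{D}_n=\sqrt{N}-1=2^n-1$, where $N=4^n$. Moreover, the number of vertices at directed distance $\vec{D}_n$ from $(0,0)$ is $3$ when $n=1$ and $6$ when $n>1$.
   Context: For $n\in\mathbb{N}$ let $G_n=\mathbb{Z}_{2^n}\times\mathbb{Z}_{2^n}$ (additive group), $N=|G_n|=4^n$. Let $S^+=\{(-1,-1),(1,0),(0,1)\}$. The directed arrowhead $\vec{\mathcal{AT}}_n$ is the Cayley digraph $\Gamma(G_n,S^+)$: vertex set $G_n$, with an arc $u\to u+s$ for each $u\in G_n$ and $s\in S^+$ (arithmetic modulo $2^n$). The oriented diameter is the maximum, over ordered pairs $(u,v)$ of vertices, of the length of a shortest directed path from $u$ to $v$. *)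

theory Defs
  imports Main "HOL-Library.Extended_Nat"
begin

text \<open>Vertices of G_n = Z_{2^n} x Z_{2^n}, represented by residues 0..2^n-1.\<close>
definition AT_vertices :: "nat \<Rightarrow> (int \<times> int) set" where
  "AT_vertices n = {(a, b). 0 \<le> a \<and> a < 2 ^ n \<and> 0 \<le> b \<and> b < 2 ^ n}"

definition S_plus :: "(int \<times> int) set" where
  "S_plus = {(-1, -1), (1, 0), (0, 1)}"

definition AT_arc :: "nat \<Rightarrow> int \<times> int \<Rightarrow> int \<times> int \<Rightarrow> bool" where
  "AT_arc n u v \<longleftrightarrow> u \<in> AT_vertices n \<and>
     (\<exists>s \<in> S_plus. v = ((fst u + fst s) mod 2 ^ n, (snd u + snd s) mod 2 ^ n))"

text \<open>Directed distance: length of a shortest directed walk (infinity if none).\<close>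
definition AT_dist :: "nat \<Rightarrow> int \<times> int \<Rightarrow> int \<times> int \<Rightarrow> enat" where
  "AT_dist n u v = (INF k \<in> {k::nat. (AT_arc n ^^ k) u v}. enat k)"

definition AT_oriented_diameter :: "nat \<Rightarrow> enat" where
  "AT_oriented_diameter n = (SUP u \<in> AT_vertices n. SUP v \<in> AT_vertices n. AT_dist n u v)"

end

theory Submission
  imports Defs
begin

lemma modI: "0 \<le> r \<Longrightarrow> r < (M::int) \<Longrightarrow> a = r + q * M \<Longrightarrow> a mod M = r"
  by simp

lemma reach:
  assumes u: "u \<in> AT_vertices n"
  shows "(AT_arc n ^^ k) u v \<longleftrightarrow> (\<exists>a b c::int. a\<ge>0 \<and> b\<ge>0 \<and> c\<ge>0 \<and> a+b+c = int k \<and>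
           v = ((fst u + a - c) mod 2^n, (snd u + b - c) mod 2^n))"
proof (induction k arbitrary: v)
  case 0
  from u have "fst u mod 2^n = fst u" "snd u mod 2^n = snd u"
    by (auto simp: AT_vertices_def)
  show ?case
  proof
    assume "(AT_arc n ^^ 0) u v"
    then have "v = u" by simp
    then show "\<exists>a b c::int. a\<ge>0 \<and> b\<ge>0 \<and> c\<ge>0 \<and> a+b+c = int 0 \<and>
           v = ((fst u + a - c) mod 2^n, (snd u + b - c) mod 2^n)"
      using \<open>fst u mod 2^n = fst u\<close> \<open>snd u mod 2^n = snd u\<close>
      by (intro exI[of _ 0]) (cases u, auto)
  next
    assume "\<exists>a b c::int. a\<ge>0 \<and> b\<ge>0 \<and> c\<ge>0 \<and> a+b+c = int 0 \<and>
           v = ((fst u + a - c) mod 2^n, (snd u + b - c) mod 2^n)"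
    then obtain a b c :: int where "a\<ge>0" "b\<ge>0" "c\<ge>0" "a+b+c = 0" and
      "v = ((fst u + a - c) mod 2^n, (snd u + b - c) mod 2^n)" by auto
    moreover have "a = 0" "b = 0" "c = 0" using calculation by linarith+
    ultimately have "v = (fst u mod 2^n, snd u mod 2^n)" by simp
    then show "(AT_arc n ^^ 0) u v"
      using \<open>fst u mod 2^n = fst u\<close> \<open>snd u mod 2^n = snd u\<close> by (cases u) auto
  qed
next
  case (Suc k)
  have M: "(0::int) < 2^n" by simp
  show ?case
  proof
    assume "(AT_arc n ^^ Suc k) u v"
    then obtain w where w: "(AT_arc n ^^ k) u w" and wv: "AT_arc n w v" by auto
    from w Suc.IH obtain a b c :: int where abc: "a\<ge>0" "b\<ge>0" "c\<ge>0" "a+b+c = int k"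
      and weq: "w = ((fst u + a - c) mod 2^n, (snd u + b - c) mod 2^n)" by blast
    from wv obtain s where s: "s \<in> S_plus" and veq: "v = ((fst w + fst s) mod 2^n, (snd w + snd s) mod 2^n)"
      unfolding AT_arc_def by blast
    from s have "s = (-1,-1) \<or> s = (1,0) \<or> s = (0,1)" by (simp add: S_plus_def)
    then show "\<exists>a b c::int. a\<ge>0 \<and> b\<ge>0 \<and> c\<ge>0 \<and> a+b+c = int (Suc k) \<and>
           v = ((fst u + a - c) mod 2^n, (snd u + b - c) mod 2^n)"
    proof (elim disjE)
      assume "s = (-1,-1)"
      then have "v = ((fst u + a - (c+1)) mod 2^n, (snd u + b - (c+1)) mod 2^n)"
        using veq weq by (simp add: mod_add_left_eq mod_add_right_eq mod_diff_left_eq algebra_simps)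
      then show ?thesis using abc by (intro exI[of _ a] exI[of _ b] exI[of _ "c+1"]) auto
    next
      assume "s = (1,0)"
      then have "v = ((fst u + (a+1) - c) mod 2^n, (snd u + b - c) mod 2^n)"
        using veq weq by (simp add: mod_add_left_eq mod_add_right_eq mod_diff_left_eq algebra_simps)
      then show ?thesis using abc by (intro exI[of _ "a+1"] exI[of _ b] exI[of _ "c"]) auto
    next
      assume "s = (0,1)"
      then have "v = ((fst u + a - c) mod 2^n, (snd u + (b+1) - c) mod 2^n)"
        using veq weq by (simp add: mod_add_left_eq mod_add_right_eq mod_diff_left_eq algebra_simps)
      then show ?thesis using abc by (intro exI[of _ a] exI[of _ "b+1"] exI[of _ "c"]) auto
    qed
  next
    assume "\<exists>a b c::int. a\<ge>0 \<and> b\<ge>0 \<and> c\<ge>0 \<and> a+b+c = int (Suc k) \<and>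
           v = ((fst u + a - c) mod 2^n, (snd u + b - c) mod 2^n)"
    then obtain a b c :: int where abc: "a\<ge>0" "b\<ge>0" "c\<ge>0" "a+b+c = int k + 1"
      and veq: "v = ((fst u + a - c) mod 2^n, (snd u + b - c) mod 2^n)" by auto
    have inV: "((x::int) mod 2^n, (y::int) mod 2^n) \<in> AT_vertices n" for x y
      using M by (simp add: AT_vertices_def)
    have "a > 0 \<or> b > 0 \<or> c > 0" using abc by linarith
    then show "(AT_arc n ^^ Suc k) u v"
    proof (elim disjE)
      assume "a > 0"
      define w where "w = ((fst u + (a-1) - c) mod (2::int)^n, (snd u + b - c) mod (2::int)^n)"
      have "(AT_arc n ^^ k) u w" unfolding w_def using Suc.IH abc \<open>a>0\<close>
        by (intro Suc.IH[THEN iffD2] exI[of _ "a-1"] exI[of _ b] exI[of _ c]) auto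
      moreover have "AT_arc n w v"
      proof -
        have "v = ((fst w + fst ((1,0)::int\<times>int)) mod 2^n, (snd w + snd ((1,0)::int\<times>int)) mod 2^n)"
          using veq by (simp add: w_def mod_add_left_eq mod_diff_left_eq add_diff_eq diff_diff_eq2)
        moreover have "w \<in> AT_vertices n" unfolding w_def by (rule inV)
        ultimately show ?thesis unfolding AT_arc_def S_plus_def by blast
      qed
      ultimately show ?thesis by auto
    next
      assume "b > 0"
      define w where "w = ((fst u + a - c) mod (2::int)^n, (snd u + (b-1) - c) mod (2::int)^n)"
      have "(AT_arc n ^^ k) u w" unfolding w_def using Suc.IH abc \<open>b>0\<close>
        by (intro Suc.IH[THEN iffD2] exI[of _ "a"] exI[of _ "b-1"] exI[of _ c]) auto
      moreover have "AT_arc n w v"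
      proof -
        have "v = ((fst w + fst ((0,1)::int\<times>int)) mod 2^n, (snd w + snd ((0,1)::int\<times>int)) mod 2^n)"
          using veq by (simp add: w_def mod_add_left_eq mod_diff_left_eq add_diff_eq diff_diff_eq2)
        moreover have "w \<in> AT_vertices n" unfolding w_def by (rule inV)
        ultimately show ?thesis unfolding AT_arc_def S_plus_def by blast
      qed
      ultimately show ?thesis by auto
    next
      assume "c > 0"
      define w where "w = ((fst u + a - (c-1)) mod (2::int)^n, (snd u + b - (c-1)) mod (2::int)^n)"
      have "(AT_arc n ^^ k) u w" unfolding w_def using Suc.IH abc \<open>c>0\<close>
        by (intro Suc.IH[THEN iffD2] exI[of _ "a"] exI[of _ "b"] exI[of _ "c-1"]) auto
      moreover have "AT_arc n w v"
      proof -
        have "v = ((fst w + fst ((-1,-1)::int\<times>int)) mod 2^n, (snd w + snd ((-1,-1)::int\<times>int)) mod 2^n)"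
          using veq by (simp add: w_def mod_add_left_eq mod_diff_left_eq add_diff_eq diff_diff_eq2)
        moreover have "w \<in> AT_vertices n" unfolding w_def by (rule inV)
        ultimately show ?thesis unfolding AT_arc_def S_plus_def by blast
      qed
      ultimately show ?thesis by auto
    qed
  qed
qed


definition rep :: "int \<Rightarrow> int \<Rightarrow> int \<Rightarrow> int \<Rightarrow> bool" where
  "rep M x y k \<longleftrightarrow> (\<exists>a b c. a\<ge>0 \<and> b\<ge>0 \<and> c\<ge>0 \<and> a+b+c = k \<and> (a-c) mod M = x \<and> (b-c) mod M = y)"

definition Eset :: "int \<Rightarrow> int \<Rightarrow> (int\<times>int) set" where
  "Eset t r = (if r = 1 then {(t,2*t),(t,2*t+1),(t+1,2*t+1),(2*t,t),(2*t+1,t),(2*t+1,t+1)}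
      else {(t,2*t+1),(t+1,2*t+1),(t+1,2*t+2),(2*t+1,t),(2*t+1,t+1),(2*t+2,t+1)})"

lemma key: "\<And>x y t M r c'::int. (x,y) \<in> Eset t r \<Longrightarrow> r = 1 \<or> r = 2 \<Longrightarrow> M = 3*t+r \<Longrightarrow> 0 \<le> t \<Longrightarrow> 0 \<le> c' \<Longrightarrow> c' < M \<Longrightarrow> x < M \<Longrightarrow> y < M \<Longrightarrow>
   (if x + c' < M then x + c' else x + c' - M) + (if y + c' < M then y + c' else y + c' - M) + c' \<ge> M - 1"
  unfolding Eset_def
  apply (elim disjE)
   apply (simp_all)
   apply (elim disjE; simp split: if_splits)
  apply (elim disjE; simp split: if_splits)
  done
lemma int2: "(a::int) \<le> x \<Longrightarrow> x \<le> a + 1 \<Longrightarrow> x = a \<or> x = a + 1" by linarith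
lemma int3: "(a::int) \<le> x \<Longrightarrow> x \<le> a + 2 \<Longrightarrow> x = a \<or> x = a + 1 \<or> x = a + 2" by linarith
lemma key2: "\<And>x y t M r::int. y < x \<Longrightarrow> x+y \<ge> M-1 \<Longrightarrow> M+x-2*y \<ge> M-1 \<Longrightarrow> 2*M-2*x+y \<ge> M-1 \<Longrightarrow>
   y = t \<or> y = t+1 \<Longrightarrow> r = 1 \<or> r = 2 \<Longrightarrow> M = 3*t+r \<Longrightarrow> 0 \<le> t \<Longrightarrow>
   (x,y) \<in> Eset t r \<and> (x+y \<le> M-1 \<or> M+x-2*y \<le> M-1 \<or> (y<x \<and> 2*M-2*x+y \<le> M-1))"
proof -
  fix x y t M r :: int
  assume a: "y < x" "x+y \<ge> M-1" "M+x-2*y \<ge> M-1" "2*M-2*x+y \<ge> M-1"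
   "y = t \<or> y = t+1" "r = 1 \<or> r = 2" "M = 3*t+r" "0 \<le> t"
  have "2*t \<le> x" "x \<le> 2*t+2" using a by linarith+
  then have "x = 2*t \<or> x = 2*t+1 \<or> x = 2*t+2" by (rule int3)
  then show "(x,y) \<in> Eset t r \<and> (x+y \<le> M-1 \<or> M+x-2*y \<le> M-1 \<or> (y<x \<and> 2*M-2*x+y \<le> M-1))"
    using a(1-4,5,6,7) unfolding Eset_def by (elim disjE; simp)
qed

lemma Eset_swap: "(x,y) \<in> Eset t r \<longleftrightarrow> (y,x) \<in> Eset t r"
  unfolding Eset_def by auto

lemma rep_swap: "rep M x y k \<Longrightarrow> rep M y x k"
  unfolding rep_def by (metis add.commute add.left_commute)


lemma opts:
  fixes M x y :: int
  assumes "0 \<le> x" "x < M" "0 \<le> y" "y < M" "y \<le> x"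
  shows "rep M x y (x+y)" "rep M x y (M+x-2*y)" "y < x \<Longrightarrow> rep M x y (2*M-2*x+y)"
proof -
  show "rep M x y (x+y)" unfolding rep_def using assms
    by (intro exI[of _ x] exI[of _ y] exI[of _ 0]) simp
  show "rep M x y (M+x-2*y)" unfolding rep_def using assms
    by (intro exI[of _ "x-y"] exI[of _ 0] exI[of _ "M-y"]) (auto intro!: modI[where q="-1"])
  show "rep M x y (2*M-2*x+y)" if "y<x" unfolding rep_def using assms that
    by (intro exI[of _ 0] exI[of _ "y-x+M"] exI[of _ "M-x"]) (auto intro!: modI[where q="-1"] modI[where q="0"])
qed

lemma upper_ge:
  fixes M x y t r :: int
  assumes "0 \<le> x" "x < M" "0 \<le> y" "y < M" "y \<le> x" "M = 3*t+r" "r = 1 \<or> r = 2" "t \<ge> 0"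
  shows "\<exists>k. rep M x y k \<and> k \<le> M-1 \<and> ((x,y) \<notin> Eset t r \<longrightarrow> k \<le> M-2)"
proof (cases "x+y \<le> M-2 \<or> M+x-2*y \<le> M-2 \<or> (y<x \<and> 2*M-2*x+y \<le> M-2)")
  case True
  then show ?thesis
  proof (elim disjE)
    assume "x+y \<le> M-2" then show ?thesis using opts(1)[OF assms(1-5)] by (intro exI[of _ "x+y"]) auto
  next
    assume "M+x-2*y \<le> M-2" then show ?thesis using opts(2)[OF assms(1-5)] by (intro exI[of _ "M+x-2*y"]) auto
  next
    assume "y<x \<and> 2*M-2*x+y \<le> M-2" then show ?thesis using opts(3)[OF assms(1-5)] by (intro exI[of _ "2*M-2*x+y"]) auto
  qed
next
  case False
  then have F: "x+y \<ge> M-1" "M+x-2*y \<ge> M-1" "y<x \<Longrightarrow> 2*M-2*x+y \<ge> M-1" by auto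
  have "(x,y) \<in> Eset t r \<and> (x+y \<le> M-1 \<or> M+x-2*y \<le> M-1 \<or> (y<x \<and> 2*M-2*x+y \<le> M-1))"
  proof (cases "y = x")
    case True
    then have "M \<le> 3" "y \<le> 1" using F assms by linarith+
    then have t0: "t = 0" using assms by presburger
    show ?thesis
    proof (cases "r = 1")
      case True
      then have "M = 1" "x = 0" "y = 0" using t0 assms \<open>y = x\<close> by linarith+
      then show ?thesis using True t0 unfolding Eset_def by simp
    next
      case False
      then have "r = 2" "M = 2" using t0 assms by linarith+
      then have "x = 1" "y = 1" using F assms \<open>y = x\<close> by linarith+
      then show ?thesis using \<open>r = 2\<close> \<open>M = 2\<close> t0 unfolding Eset_def by simp
    qed
  next
    case False
    then have yx: "y < x" using assms by linarith
    have "3*y \<ge> M - 3" "3*y \<le> M + 3" using F yx assms by linarith+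
    then have "y = t \<or> y = t + 1" using assms by presburger
    then show ?thesis using key2[of y x M t r] F yx assms by blast
  qed
  then show ?thesis using opts[OF assms(1-5)] by fastforce
qed

lemma upper:
  fixes M x y t r :: int
  assumes "0 \<le> x" "x < M" "0 \<le> y" "y < M" "M = 3*t+r" "r = 1 \<or> r = 2" "t \<ge> 0"
  shows "\<exists>k. rep M x y k \<and> k \<le> M-1 \<and> ((x,y) \<notin> Eset t r \<longrightarrow> k \<le> M-2)"
proof (cases "y \<le> x")
  case True then show ?thesis using upper_ge assms by blast
next
  case False
  then obtain k where "rep M y x k \<and> k \<le> M-1 \<and> ((y,x) \<notin> Eset t r \<longrightarrow> k \<le> M-2)"
    using upper_ge[of y M x t r] assms by auto
  then show ?thesis using rep_swap Eset_swap by blast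
qed

lemma lower:
  fixes M x y t r k :: int
  assumes "0 \<le> x" "x < M" "0 \<le> y" "y < M" "M = 3*t+r" "r = 1 \<or> r = 2" "t \<ge> 0"
    and E: "(x,y) \<in> Eset t r" and R: "rep M x y k"
  shows "k \<ge> M-1"
proof -
  obtain a b c where abc: "a\<ge>0" "b\<ge>0" "c\<ge>0" "a+b+c = k" "(a-c) mod M = x" "(b-c) mod M = y"
    using R unfolding rep_def by blast
  have M0: "M > 0" using assms by linarith
  define c' where "c' = c mod M"
  have c': "0 \<le> c'" "c' < M" "c' \<le> c" using M0 abc unfolding c'_def
    by (auto simp: zmod_le_nonneg_dividend)
  have "a mod M = ((a-c) mod M + c) mod M" by (simp add: mod_add_left_eq)
  also have "\<dots> = (x + c') mod M" using abc by (simp add: c'_def mod_add_right_eq)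
  finally have am: "a mod M = (x + c') mod M" .
  have "b mod M = ((b-c) mod M + c) mod M" by (simp add: mod_add_left_eq)
  also have "\<dots> = (y + c') mod M" using abc by (simp add: c'_def mod_add_right_eq)
  finally have bm: "b mod M = (y + c') mod M" .
  have A: "(x + c') mod M = (if x + c' < M then x + c' else x + c' - M)"
    using assms c' by (auto intro: modI[where q=0] modI[where q=1])
  have B: "(y + c') mod M = (if y + c' < M then y + c' else y + c' - M)"
    using assms c' by (auto intro: modI[where q=0] modI[where q=1])
  have "a \<ge> a mod M" "b \<ge> b mod M" using abc M0 by (auto simp: zmod_le_nonneg_dividend)
  then have ineq: "a \<ge> (if x + c' < M then x + c' else x + c' - M)" "b \<ge> (if y + c' < M then y + c' else y + c' - M)"
    using am bm A B by auto
  have key: "(if x + c' < M then x + c' else x + c' - M) + (if y + c' < M then y + c' else y + c' - M) + c' \<ge> M - 1"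
    using key[OF E assms(6,5,7) c'(1,2) assms(2,4)] .
  show ?thesis using key ineq abc c' by linarith
qed


lemma pow2mod3: "(2::int)^n mod 3 = 1 \<or> (2::int)^n mod 3 = 2"
proof (induction n)
  case 0 then show ?case by simp
next
  case (Suc n)
  have "(2::int)^Suc n mod 3 = (2 * ((2::int)^n mod 3)) mod 3" by (simp add: mod_mult_right_eq)
  then show ?case using Suc by auto
qed

lemma walk_rep:
  assumes u: "u \<in> AT_vertices n" and v: "v \<in> AT_vertices n"
  shows "(AT_arc n ^^ k) u v \<longleftrightarrow> rep (2^n) ((fst v - fst u) mod 2^n) ((snd v - snd u) mod 2^n) (int k)"
proof -
  have v1: "fst v mod 2^n = fst v" "snd v mod 2^n = snd v" using v by (auto simp: AT_vertices_def)
  have eq: "(p + a - c) mod (2::int)^n = q mod 2^n \<longleftrightarrow> (a - c) mod 2^n = (q - p) mod 2^n" for p q a c :: int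
    by (simp add: mod_eq_dvd_iff algebra_simps)
  have "v = ((fst u + a - c) mod 2^n, (snd u + b - c) mod 2^n) \<longleftrightarrow>
     (a - c) mod 2^n = (fst v - fst u) mod 2^n \<and> (b - c) mod 2^n = (snd v - snd u) mod 2^n" for a b c :: int
    using eq[of "fst u" a c "fst v"] eq[of "snd u" b c "snd v"] v1 by (cases v) auto
  then show ?thesis unfolding reach[OF u] rep_def by auto
qed

lemma dist_le: "(AT_arc n ^^ k) u v \<Longrightarrow> AT_dist n u v \<le> enat k"
  unfolding AT_dist_def by (rule INF_lower2[of k]) auto

lemma dist_ge: "(\<And>k. (AT_arc n ^^ k) u v \<Longrightarrow> m \<le> k) \<Longrightarrow> enat m \<le> AT_dist n u v"
  unfolding AT_dist_def by (rule INF_greatest) auto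

lemma rep_nonneg: "rep M x y k \<Longrightarrow> k \<ge> 0"
  unfolding rep_def by auto

theorem proposition4:
  fixes n :: nat
  assumes "n \<ge> 1"
  shows "AT_oriented_diameter n = enat (2 ^ n - 1)
    \<and> card {v \<in> AT_vertices n. AT_dist n (0, 0) v = enat (2 ^ n - 1)} = (if n = 1 then 3 else 6)"
proof -
  define M :: int where "M = 2^n"
  define t where "t = M div 3"
  define r where "r = M mod 3"
  have Mtr: "M = 3*t + r" unfolding t_def r_def by simp
  have r12: "r = 1 \<or> r = 2" unfolding r_def M_def using pow2mod3 by blast
  have M2: "M \<ge> 2" unfolding M_def using assms
    by (metis power_increasing power_one_right one_le_numeral zero_less_numeral mult_le_cancel_left1)
  have t0: "t \<ge> 0" using Mtr r12 M2 by linarith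
  have Mnat: "M - 1 = int (2^n - 1)" unfolding M_def
    by (simp add: of_nat_diff)
  have V: "AT_vertices n = {(a, b). 0 \<le> a \<and> a < M \<and> 0 \<le> b \<and> b < M}"
    unfolding AT_vertices_def M_def by simp
  have modV: "0 \<le> z mod M" "z mod M < M" for z using M2 by auto
  have ub: "AT_dist n u v \<le> enat (2^n - 1)" if u: "u \<in> AT_vertices n" and v: "v \<in> AT_vertices n" for u v
  proof -
    obtain k where k: "rep M ((fst v - fst u) mod M) ((snd v - snd u) mod M) k" "k \<le> M - 1"
      using upper[OF modV(1,2) modV(1,2) Mtr r12 t0] by blast
    have "k \<ge> 0" using rep_nonneg k(1) .
    then have "(AT_arc n ^^ nat k) u v" using walk_rep[OF u v] k(1) unfolding M_def by simp
    then have "AT_dist n u v \<le> enat (nat k)" by (rule dist_le)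
    also have "nat k \<le> 2^n - 1" using k(2) Mnat by linarith
    finally show ?thesis by simp
  qed
  have V0: "(0,0) \<in> AT_vertices n" unfolding V using M2 by simp
  have walk0: "(AT_arc n ^^ k) (0,0) v \<longleftrightarrow> rep M (fst v) (snd v) (int k)" if v: "v \<in> AT_vertices n" for v k
  proof -
    have "fst v mod M = fst v" "snd v mod M = snd v" using v unfolding V by auto
    then show ?thesis using walk_rep[OF V0 v, of k] unfolding M_def by simp
  qed
  have distE: "AT_dist n (0,0) v = enat (2^n - 1)" if v: "v \<in> AT_vertices n" and E: "v \<in> Eset t r" for v
  proof (rule antisym)
    show "AT_dist n (0,0) v \<le> enat (2^n - 1)" by (rule ub[OF V0 v])
    show "enat (2^n - 1) \<le> AT_dist n (0,0) v"
    proof (rule dist_ge)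
      fix k assume "(AT_arc n ^^ k) (0,0) v"
      then have "rep M (fst v) (snd v) (int k)" using walk0[OF v] by simp
      moreover have "0 \<le> fst v" "fst v < M" "0 \<le> snd v" "snd v < M" using v unfolding V by auto
      moreover have "(fst v, snd v) \<in> Eset t r" using E by simp
      ultimately have "int k \<ge> M - 1" using lower Mtr r12 t0 by blast
      then show "2^n - 1 \<le> k" using Mnat by linarith
    qed
  qed
  have distNE: "AT_dist n (0,0) v \<noteq> enat (2^n - 1)" if v: "v \<in> AT_vertices n" and E: "v \<notin> Eset t r" for v
  proof -
    have b: "0 \<le> fst v" "fst v < M" "0 \<le> snd v" "snd v < M" using v unfolding V by auto
    obtain k where k: "rep M (fst v) (snd v) k" "k \<le> M - 2"
      using upper[OF b Mtr r12 t0] E by (cases v) auto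
    have "k \<ge> 0" using rep_nonneg k(1) .
    then have "(AT_arc n ^^ nat k) (0,0) v" using walk0[OF v] k(1) by simp
    then have "AT_dist n (0,0) v \<le> enat (nat k)" by (rule dist_le)
    moreover have "nat k < 2^n - 1" using k(2) Mnat \<open>k \<ge> 0\<close> by linarith
    ultimately show ?thesis by auto
  qed
  have setEq: "{v \<in> AT_vertices n. AT_dist n (0, 0) v = enat (2 ^ n - 1)} = Eset t r \<inter> AT_vertices n"
    using distE distNE by blast
  define v0 where "v0 = (t, M - 1 - t)"
  have v0E: "v0 \<in> Eset t r" unfolding v0_def Eset_def using Mtr r12 by auto
  have v0V: "v0 \<in> AT_vertices n" unfolding v0_def V using Mtr r12 t0 by auto
  have diam: "AT_oriented_diameter n = enat (2 ^ n - 1)"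
    unfolding AT_oriented_diameter_def
  proof (rule antisym)
    show "(SUP u\<in>AT_vertices n. SUP v\<in>AT_vertices n. AT_dist n u v) \<le> enat (2 ^ n - 1)"
      by (intro SUP_least ub)
    show "enat (2 ^ n - 1) \<le> (SUP u\<in>AT_vertices n. SUP v\<in>AT_vertices n. AT_dist n u v)"
      using distE[OF v0V v0E] by (intro SUP_upper2[OF V0] SUP_upper2[OF v0V]) simp
  qed
  have card: "card (Eset t r \<inter> AT_vertices n) = (if n = 1 then 3 else 6)"
  proof (cases "n = 1")
    case True
    then have "M = 2" unfolding M_def by simp
    then have "t = 0" "r = 2" unfolding t_def r_def by simp_all
    then have "Eset t r \<inter> AT_vertices n = {(0,1),(1,1),(1,0)}"
      unfolding Eset_def V \<open>M = 2\<close> by auto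
    then show ?thesis using True by simp
  next
    case False
    then have "n \<ge> 2" using assms by simp
    then have "M \<ge> 4" unfolding M_def
      by (metis power_increasing power2_eq_square mult_2 numeral_Bit0 zero_less_numeral one_le_numeral)
    then have t1: "t \<ge> 1" using Mtr r12 by linarith
    have "Eset t r \<subseteq> AT_vertices n" unfolding Eset_def V using Mtr r12 t1 by auto
    then have "Eset t r \<inter> AT_vertices n = Eset t r" by blast
    moreover have "card (Eset t r) = 6" unfolding Eset_def using t1 by auto
    ultimately show ?thesis using False by simp
  qed
  show ?thesis using diam setEq card by simp
qed

end
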